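(* Let $w=w_1\cdots w_n$ be a word of length $n\ge 2$ such that $w_i\ne w_{n-i+1}$ for some $i$. Then $f(w)\le 2n$.
   Context: A word of length $n$ is a sequence $w=w_1w_2\cdots w_n$ of letters (symbols). Let $[n]=\{1,\dots,n\}$. An $n$-grid is a function $G:[n]^2\to\Sigma$, where $\Sigma$ is an arbitrary set of letters. The $i$th row of $G$ contains $w$ if $G(i,j)=w_j$ for all $1\le j\le n$, or $G(i,j)=w_{n-j+1}$ for all $1\le j\le n$. The $j$th column contains $w$ if $G(i,j)=w_i$ for all $i$, or $G(i,j)=w_{n-i+1}$ for all $i$. The main diagonal contains $w$ if $G(i,i)=w_i$ for all $i$ or $G(i,i)=w_{n-i+1}$ for all $i$; the anti-diagonal contains $w$ if $G(i,n-i+1)=w_i$ for all $i$ or $G(i,n-i+1)=w_{n-i+1}$ for all $i$. Let $f(w,G)$ be the number of the $2n+2$ lines ($n$ rows, $n$ columns, $2$ diagonals) of $G$ that contain $w$, and $f(w)=\max_G f(w,G)$ over all $n$-grids $G$. *)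

theory Defs
  imports Main
begin

text \<open>A word of length n is w :: nat \<Rightarrow> 'a, letters w 1, ..., w n.
  An n-grid is G :: nat \<Rightarrow> nat \<Rightarrow> 'a, with only the values on {1..n} x {1..n} relevant.\<close>

definition row_contains :: "nat \<Rightarrow> (nat \<Rightarrow> 'a) \<Rightarrow> (nat \<Rightarrow> nat \<Rightarrow> 'a) \<Rightarrow> nat \<Rightarrow> bool" where
  "row_contains n w G i \<longleftrightarrow>
     (\<forall>j\<in>{1..n}. G i j = w j) \<or> (\<forall>j\<in>{1..n}. G i j = w (n - j + 1))"

definition col_contains :: "nat \<Rightarrow> (nat \<Rightarrow> 'a) \<Rightarrow> (nat \<Rightarrow> nat \<Rightarrow> 'a) \<Rightarrow> nat \<Rightarrow> bool" where
  "col_contains n w G j \<longleftrightarrow>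
     (\<forall>i\<in>{1..n}. G i j = w i) \<or> (\<forall>i\<in>{1..n}. G i j = w (n - i + 1))"

definition diag_contains :: "nat \<Rightarrow> (nat \<Rightarrow> 'a) \<Rightarrow> (nat \<Rightarrow> nat \<Rightarrow> 'a) \<Rightarrow> bool" where
  "diag_contains n w G \<longleftrightarrow>
     (\<forall>i\<in>{1..n}. G i i = w i) \<or> (\<forall>i\<in>{1..n}. G i i = w (n - i + 1))"

definition antidiag_contains :: "nat \<Rightarrow> (nat \<Rightarrow> 'a) \<Rightarrow> (nat \<Rightarrow> nat \<Rightarrow> 'a) \<Rightarrow> bool" where
  "antidiag_contains n w G \<longleftrightarrow>
     (\<forall>i\<in>{1..n}. G i (n - i + 1) = w i) \<or> (\<forall>i\<in>{1..n}. G i (n - i + 1) = w (n - i + 1))"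

definition lines_count :: "nat \<Rightarrow> (nat \<Rightarrow> 'a) \<Rightarrow> (nat \<Rightarrow> nat \<Rightarrow> 'a) \<Rightarrow> nat" where
  "lines_count n w G =
     card {i\<in>{1..n}. row_contains n w G i} + card {j\<in>{1..n}. col_contains n w G j}
     + (if diag_contains n w G then 1 else 0) + (if antidiag_contains n w G then 1 else 0)"

text \<open>f(w) = max over all n-grids G (with letters in the same alphabet type).\<close>
definition max_lines :: "nat \<Rightarrow> (nat \<Rightarrow> 'a) \<Rightarrow> nat" where
  "max_lines n w = Max {lines_count n w G | G. True}"

end

theory Submission
  imports Defs
begin

lemma k4:
  fixes a b p q r s :: 'a
  assumes "a \<noteq> b"
  and "rk \<Longrightarrow> (p = a \<and> q = b) \<or> (p = b \<and> q = a)"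
  and "rm \<Longrightarrow> (r = a \<and> s = b) \<or> (r = b \<and> s = a)"
  and "ck \<Longrightarrow> (p = a \<and> r = b) \<or> (p = b \<and> r = a)"
  and "cm \<Longrightarrow> (q = a \<and> s = b) \<or> (q = b \<and> s = a)"
  and "d \<Longrightarrow> (p = a \<and> s = b) \<or> (p = b \<and> s = a)"
  and "ad \<Longrightarrow> (q = a \<and> r = b) \<or> (q = b \<and> r = a)"
  shows "(if rk then 1 else 0) + (if rm then 1 else 0) + (if ck then 1 else 0)
       + (if cm then 1 else 0) + (if d then 1 else 0) + (if ad then 1 else 0) \<le> (4::nat)"
  using assms by (cases rk; cases rm; cases ck; cases cm; cases d; cases ad) auto

lemma card_bound:
  fixes P :: "nat \<Rightarrow> bool"
  assumes "k \<in> {1..n}" "m \<in> {1..n}" "k \<noteq> m"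
  shows "card {i\<in>{1..n}. P i} + (if P k then 0 else 1) + (if P m then 0 else 1) \<le> n"
proof -
  let ?F = "{x\<in>{k,m}. \<not> P x}"
  have c: "card ?F = (if P k then 0 else 1) + (if P m then 0 else 1)"
  proof (cases "P k"; cases "P m")
    assume "P k" "\<not> P m" hence "?F = {m}" by auto thus ?thesis using \<open>P k\<close> \<open>\<not> P m\<close> by simp
  next
    assume "\<not> P k" "P m" hence "?F = {k}" by auto thus ?thesis using \<open>\<not> P k\<close> \<open>P m\<close> by simp
  next
    assume "\<not> P k" "\<not> P m" hence "?F = {k,m}" by auto thus ?thesis using \<open>\<not> P k\<close> \<open>\<not> P m\<close> assms(3) by simp
  next
    assume "P k" "P m" hence "?F = {}" by auto thus ?thesis using \<open>P k\<close> \<open>P m\<close> by simp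
  qed
  have "{i\<in>{1..n}. P i} \<subseteq> {1..n} - ?F" by auto
  hence "card {i\<in>{1..n}. P i} \<le> card ({1..n} - ?F)" by (intro card_mono) auto
  also have "\<dots> = n - card ?F"
    using assms by (subst card_Diff_subset) auto
  finally show ?thesis using c card_mono[of "{1..n}" ?F] assms by auto
qed

lemma each:
  fixes n :: nat and w :: "nat \<Rightarrow> 'a"
  assumes "n \<ge> 2"
    and "\<exists>i\<in>{1..n}. w i \<noteq> w (n - i + 1)"
  shows "lines_count n w G \<le> 2 * n"
proof -
  obtain k where k: "k \<in> {1..n}" "w k \<noteq> w (n - k + 1)" using assms(2) by blast
  define m where "m = n - k + 1"
  have m: "m \<in> {1..n}" "n - m + 1 = k" "k \<noteq> m" using k unfolding m_def by auto
  have wkm: "w k \<noteq> w m" using k m_def by simp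
  have r: "card {i\<in>{1..n}. row_contains n w G i} + (if row_contains n w G k then 0 else 1)
     + (if row_contains n w G m then 0 else 1) \<le> n"
    by (rule card_bound[OF k(1) m(1) m(3)])
  have c: "card {i\<in>{1..n}. col_contains n w G i} + (if col_contains n w G k then 0 else 1)
     + (if col_contains n w G m then 0 else 1) \<le> n"
    by (rule card_bound[OF k(1) m(1) m(3)])
  have K: "(if row_contains n w G k then 1 else 0) + (if row_contains n w G m then 1 else 0)
     + (if col_contains n w G k then 1 else 0) + (if col_contains n w G m then 1 else 0)
     + (if diag_contains n w G then 1 else 0) + (if antidiag_contains n w G then 1 else 0) \<le> (4::nat)"
  proof (rule k4[OF wkm, where p = "G k k" and q = "G k m" and r = "G m k" and s = "G m m"])
    show "(G k k = w k \<and> G k m = w m) \<or> (G k k = w m \<and> G k m = w k)" if "row_contains n w G k"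
      using that k(1) m unfolding row_contains_def m_def by auto
    show "(G m k = w k \<and> G m m = w m) \<or> (G m k = w m \<and> G m m = w k)" if "row_contains n w G m"
      using that k(1) m unfolding row_contains_def m_def by auto
    show "(G k k = w k \<and> G m k = w m) \<or> (G k k = w m \<and> G m k = w k)" if "col_contains n w G k"
      using that k(1) m unfolding col_contains_def m_def by auto
    show "(G k m = w k \<and> G m m = w m) \<or> (G k m = w m \<and> G m m = w k)" if "col_contains n w G m"
      using that k(1) m unfolding col_contains_def m_def by auto
    show "(G k k = w k \<and> G m m = w m) \<or> (G k k = w m \<and> G m m = w k)" if "diag_contains n w G"
      using that k(1) m unfolding diag_contains_def m_def by auto
    show "(G k m = w k \<and> G m k = w m) \<or> (G k m = w m \<and> G m k = w k)" if "antidiag_contains n w G"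
    proof -
      have "G m (n - m + 1) = w m \<and> G k (n - k + 1) = w k \<or> G m (n - m + 1) = w (n - m + 1) \<and> G k (n - k + 1) = w (n - k + 1)"
        using that k(1) m(1) unfolding antidiag_contains_def by auto
      thus ?thesis using m(2) unfolding m_def[symmetric] by auto
    qed
  qed
  show ?thesis using r c K unfolding lines_count_def by (simp split: if_splits)
qed

theorem lemma11:
  fixes n :: nat and w :: "nat \<Rightarrow> 'a"
  assumes "n \<ge> 2"
    and "\<exists>i\<in>{1..n}. w i \<noteq> w (n - i + 1)"
  shows "max_lines n w \<le> 2 * n"
proof -
  have "{lines_count n w G | G. True} \<subseteq> {..2*n}" using each[OF assms] by auto
  hence fin: "finite {lines_count n w G | G. True}" by (rule finite_subset) auto
  show ?thesis unfolding max_lines_def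
    using fin each[OF assms] by (subst Max_le_iff) auto
qed

end
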